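(* For $i=1,2$ let $\mathcal{G}_i$ be an $r_i$-regular graph with $n_i$ vertices, and let $\mu_{11},\ldots,\mu_{1n_1}$ be the Laplacian eigenvalues of $\mathcal{G}_1$. Then $\mathcal{G}_1\circledast\mathcal{G}_2$ is Laplacian integral if and only if $\mathcal{G}_2$ is Laplacian integral and, for each $i=1,2,\ldots,n_1$, the roots of $x-n_2-n_2\mu_{1i}-n_2\chi_{L_{\mathcal{G}_2}}(x-n_2)$ are integers.
   Context: All graphs are simple, finite and undirected. $L_{\mathcal{G}}=D_{\mathcal{G}}-A_{\mathcal{G}}$ is the Laplacian matrix (degree matrix minus adjacency matrix). A graph is Laplacian integral if all eigenvalues of its Laplacian matrix are integers. The Laplacian coronal of a graph $\mathcal{G}$ on $n$ vertices is the rational function $\chi_{L_{\mathcal{G}}}(x)=\mathbf{1}_n^T(xI_n-L_{\mathcal{G}})^{-1}\mathbf{1}_n$, $\mathbf{1}_n$ the all-ones vector; "roots" of the expression in the claim are the values of $x$ at which this rational function vanishes. The graph product $\mathcal{G}_1\circledast\mathcal{G}_2$ of $\mathcal{G}_1$ (vertices $u_1,\ldots,u_{n_1}$) and $\mathcal{G}_2$ (vertices $v_1,\ldots,v_{n_2}$) has vertex set $\{a_{ik},b_{ik}:1\le i\le n_1,1\le k\le n_2\}$ and edges: $a_{ik}a_{jl}$ for all $k,l$ whenever $u_iu_j\in E(\mathcal{G}_1)$; $b_{ri}b_{rj}$ for all $r$ whenever $v_iv_j\in E(\mathcal{G}_2)$; $a_{ip}b_{iq}$ for all $i,p,q$. 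*)

theory Defs
  imports "HOL-Analysis.Analysis"
begin

definition simple_graph :: "('v \<Rightarrow> 'v \<Rightarrow> bool) \<Rightarrow> bool" where
  "simple_graph E \<longleftrightarrow> (\<forall>u v. E u v \<longrightarrow> E v u) \<and> (\<forall>v. \<not> E v v)"

definition degree :: "('v::finite \<Rightarrow> 'v \<Rightarrow> bool) \<Rightarrow> 'v \<Rightarrow> nat" where
  "degree E v = card {w. E v w}"

definition regular :: "('v::finite \<Rightarrow> 'v \<Rightarrow> bool) \<Rightarrow> nat \<Rightarrow> bool" where
  "regular E r \<longleftrightarrow> (\<forall>v. degree E v = r)"

definition laplacian :: "('v::finite \<Rightarrow> 'v \<Rightarrow> bool) \<Rightarrow> real^'v^'v" where
  "laplacian E = (\<chi> i j. (if i = j then real (degree E i) else 0) - (if E i j then 1 else 0))"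

text \<open>The Laplacian viewed as a complex matrix (needed to evaluate the coronal at complex x).\<close>
definition claplacian :: "('v::finite \<Rightarrow> 'v \<Rightarrow> bool) \<Rightarrow> complex^'v^'v" where
  "claplacian E = (\<chi> i j. complex_of_real (laplacian E $ i $ j))"

definition is_eigenvalue :: "real^'n^'n \<Rightarrow> real \<Rightarrow> bool" where
  "is_eigenvalue A c \<longleftrightarrow> (\<exists>v. v \<noteq> 0 \<and> A *v v = c *\<^sub>R v)"

definition laplacian_integral :: "('v::finite \<Rightarrow> 'v \<Rightarrow> bool) \<Rightarrow> bool" where
  "laplacian_integral E \<longleftrightarrow> (\<forall>c. is_eigenvalue (laplacian E) c \<longrightarrow> c \<in> \<int>)"

definition coronal :: "complex^'n^'n \<Rightarrow> complex \<Rightarrow> complex" where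
  "coronal L x = (\<Sum>i\<in>UNIV. \<Sum>j\<in>UNIV. matrix_inv (mat x - L) $ i $ j)"

text \<open>Root of a rational function f (given by its values where defined):
  the rational function vanishes at x, i.e. its limit at x is 0 (this also
  accounts for removable singularities of the matrix-inverse formula).\<close>
definition rat_root :: "(complex \<Rightarrow> complex) \<Rightarrow> complex \<Rightarrow> bool" where
  "rat_root f x \<longleftrightarrow> (f \<longlongrightarrow> 0) (at x)"

text \<open>The product G1 (*) G2: vertices a_ik = Inl (i,k), b_ik = Inr (i,k).\<close>
fun prod_graph :: "('a \<Rightarrow> 'a \<Rightarrow> bool) \<Rightarrow> ('b \<Rightarrow> 'b \<Rightarrow> bool)
    \<Rightarrow> ('a \<times> 'b) + ('a \<times> 'b) \<Rightarrow> ('a \<times> 'b) + ('a \<times> 'b) \<Rightarrow> bool" where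
  "prod_graph E1 E2 (Inl (i, k)) (Inl (j, l)) = E1 i j"
| "prod_graph E1 E2 (Inr (r, i)) (Inr (s, j)) = (r = s \<and> E2 i j)"
| "prod_graph E1 E2 (Inl (i, p)) (Inr (j, q)) = (i = j)"
| "prod_graph E1 E2 (Inr (j, q)) (Inl (i, p)) = (i = j)"

end

theory Submission
  imports Defs "HOL-Computational_Algebra.Polynomial"
begin


lemma sum_if_const: "(\<Sum>j\<in>(UNIV::'v::finite set). if P j then (a::'c::comm_ring_1) else 0) = of_nat (card {j. P j}) * a"
  by (simp add: sum.If_cases)

lemma lap_apply:
  fixes E :: "'v::finite \<Rightarrow> 'v \<Rightarrow> bool"
  shows "(laplacian E *v v) $ u = (\<Sum>w\<in>UNIV. if E u w then v$u - v$w else 0)"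
proof -
  have "(laplacian E *v v) $ u = (\<Sum>w\<in>UNIV. (if u = w then real (degree E u) * v$w else 0) - (if E u w then v$w else 0))"
    unfolding laplacian_def matrix_vector_mult_def by (auto intro!: sum.cong simp: algebra_simps)
  also have "\<dots> = real (degree E u) * v$u - (\<Sum>w\<in>UNIV. if E u w then v$w else 0)"
    by (simp add: sum_subtractf)
  also have "\<dots> = (\<Sum>w\<in>UNIV. if E u w then v$u - v$w else 0)"
    by (simp add: if_distrib[of "\<lambda>t. t - _"] sum_subtractf degree_def sum.If_cases)
  finally show ?thesis .
qed

lemma clap_apply:
  fixes E :: "'v::finite \<Rightarrow> 'v \<Rightarrow> bool"
  shows "(claplacian E *v v) $ u = (\<Sum>w\<in>UNIV. if E u w then v$u - v$w else 0)"
proof -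
  have "(claplacian E *v v) $ u = (\<Sum>w\<in>UNIV. (if u = w then of_nat (degree E u) * v$w else 0) - (if E u w then v$w else 0))"
    unfolding claplacian_def laplacian_def matrix_vector_mult_def by (auto intro!: sum.cong simp: algebra_simps)
  also have "\<dots> = of_nat (degree E u) * v$u - (\<Sum>w\<in>UNIV. if E u w then v$w else 0)"
    by (simp add: sum_subtractf)
  also have "\<dots> = (\<Sum>w\<in>UNIV. if E u w then v$u - v$w else 0)"
    by (simp add: if_distrib[of "\<lambda>t. t - _"] sum_subtractf degree_def sum.If_cases)
  finally show ?thesis .
qed

lemma if_diff_distrib: "(if P then a - b else 0) = (if P then a else 0) - (if P then b else (0::'c::ab_group_add))" by simp

lemma sym_sum_zero:
  fixes E :: "'v::finite \<Rightarrow> 'v \<Rightarrow> bool" and f :: "'v \<Rightarrow> 'c::comm_ring_1"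
  assumes "simple_graph E"
  shows "(\<Sum>k\<in>UNIV. \<Sum>j\<in>UNIV. if E k j then f k - f j else 0) = 0"
proof -
  have s: "E k j = E j k" for k j using assms unfolding simple_graph_def by blast
  have "(\<Sum>k\<in>UNIV. \<Sum>j\<in>UNIV. if E k j then f j else 0) = (\<Sum>j\<in>UNIV. \<Sum>k\<in>UNIV. if E k j then f j else 0)"
    by (rule sum.swap)
  also have "\<dots> = (\<Sum>k\<in>UNIV. \<Sum>j\<in>UNIV. if E k j then f k else 0)"
    using s by simp
  moreover have "(\<Sum>k\<in>UNIV. \<Sum>j\<in>UNIV. if E k j then f k - f j else 0) =
     (\<Sum>k\<in>UNIV. \<Sum>j\<in>UNIV. if E k j then f k else 0) - (\<Sum>k\<in>UNIV. \<Sum>j\<in>UNIV. if E k j then f j else 0)"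
    by (simp add: sum_subtractf[symmetric] if_diff_distrib)
  ultimately show ?thesis by simp
qed

lemma sum_plus_UNIV: "(\<Sum>w\<in>(UNIV::('p::finite + 'q::finite) set). g w) = (\<Sum>a\<in>UNIV. g (Inl a)) + (\<Sum>b\<in>UNIV. g (Inr b))"
proof -
  have "(\<Sum>w\<in>(UNIV::('p + 'q) set). g w) = (\<Sum>w\<in>(UNIV <+> UNIV). g w)" by simp
  also have "\<dots> = (\<Sum>a\<in>UNIV. g (Inl a)) + (\<Sum>b\<in>UNIV. g (Inr b))"
    by (subst sum.Plus) (auto simp: comp_def)
  finally show ?thesis .
qed

lemma sum_pair_UNIV: "(\<Sum>w\<in>(UNIV::('p::finite \<times> 'q::finite) set). g w) = (\<Sum>a\<in>UNIV. \<Sum>b\<in>UNIV. g (a,b))"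
  by (simp add: sum.cartesian_product)

lemma if_conj_0: "(if P \<and> Q then x else 0) = (if P then (if Q then x else 0) else 0)" by simp
lemma sum_if_out: "(\<Sum>b\<in>A. if P then f b else 0) = (if P then (\<Sum>b\<in>A. f b) else 0)" by simp

lemma prod_lap_Inl:
  fixes E1 :: "'a::finite \<Rightarrow> 'a \<Rightarrow> bool" and E2 :: "'b::finite \<Rightarrow> 'b \<Rightarrow> bool"
  shows "(laplacian (prod_graph E1 E2) *v V) $ Inl (i,k) =
    (\<Sum>j\<in>UNIV. if E1 i j then (\<Sum>l\<in>UNIV. V$Inl(i,k) - V$Inl(j,l)) else 0) + (\<Sum>q\<in>UNIV. V$Inl(i,k) - V$Inr(i,q))"
  unfolding lap_apply sum_plus_UNIV sum_pair_UNIV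
  by (simp add: if_distrib sum.If_cases)

lemma prod_lap_Inr:
  fixes E1 :: "'a::finite \<Rightarrow> 'a \<Rightarrow> bool" and E2 :: "'b::finite \<Rightarrow> 'b \<Rightarrow> bool"
  shows "(laplacian (prod_graph E1 E2) *v V) $ Inr (i,k) =
    (\<Sum>p\<in>UNIV. V$Inr(i,k) - V$Inl(i,p)) + (\<Sum>j\<in>UNIV. if E2 k j then V$Inr(i,k) - V$Inr(i,j) else 0)"
  unfolding lap_apply sum_plus_UNIV sum_pair_UNIV
  by (simp add: if_conj_0 sum_if_out)

lemma mat_mulv: "mat c *v x = c *s (x::'c::comm_ring_1^'n::finite)"
proof -
  have "(\<Sum>j\<in>UNIV. (if i = j then c else 0) * x$j) = (\<Sum>j\<in>UNIV. if i = j then c * x$j else 0)" for i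
    by (rule sum.cong) auto
  then show ?thesis by (simp add: vec_eq_iff matrix_vector_mult_def mat_def)
qed

lemma gersh:
  fixes E :: "'v::finite \<Rightarrow> 'v \<Rightarrow> bool"
  assumes "claplacian E *v v = - v"
  shows "v = 0"
proof -
  define M where "M = Max ((\<lambda>w. norm (v$w)) ` UNIV)"
  have "M \<in> (\<lambda>w. norm (v$w)) ` UNIV" unfolding M_def by (rule Max_in) auto
  then obtain u where u: "M = norm (v$u)" by auto
  have mx: "norm (v$w) \<le> norm (v$u)" for w unfolding u[symmetric] M_def by (rule Max_ge) auto
  define d where "d = card {w. E u w}"
  have "- v$u = (\<Sum>w\<in>UNIV. if E u w then v$u - v$w else 0)"
    using clap_apply[of E v u] assms by simp
  also have "\<dots> = of_nat d * v$u - (\<Sum>w\<in>UNIV. if E u w then v$w else 0)"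
    by (simp add: if_diff_distrib sum_subtractf sum_if_const d_def)
  finally have eq: "(of_nat d + 1) * v$u = (\<Sum>w\<in>UNIV. if E u w then v$w else 0)"
    by (simp add: algebra_simps)
  have "norm (of_nat (Suc d) :: complex) = real (Suc d)" by (rule norm_of_nat)
  then have "norm (of_nat d + 1 :: complex) = real d + 1" by (simp add: add.commute)
  then have "(real d + 1) * norm (v$u) = norm ((of_nat d + 1) * v$u)"
    by (simp add: norm_mult)
  also have "\<dots> \<le> (\<Sum>w\<in>UNIV. norm (if E u w then v$w else 0))"
    unfolding eq by (rule norm_sum)
  also have "\<dots> \<le> (\<Sum>w\<in>UNIV. if E u w then norm (v$u) else 0)"
    by (rule sum_mono) (auto simp: mx)
  also have "\<dots> = real d * norm (v$u)" by (simp add: sum_if_const d_def)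
  finally have "norm (v$u) \<le> 0" by (simp add: algebra_simps)
  then have "\<forall>w. norm (v$w) \<le> 0" using mx order_trans by blast
  then show ?thesis by (simp add: vec_eq_iff)
qed

lemma det_m1:
  fixes E :: "'v::finite \<Rightarrow> 'v \<Rightarrow> bool"
  shows "det (mat (-1) - claplacian E) \<noteq> 0"
proof -
  have "\<forall>x. (mat (-1) - claplacian E) *v x = 0 \<longrightarrow> x = 0"
  proof (intro allI impI)
    fix x assume "(mat (-1) - claplacian E) *v x = 0"
    then have "claplacian E *v x = - x"
      by (simp add: matrix_vector_mult_diff_rdistrib mat_mulv algebra_simps)
    then show "x = 0" by (rule gersh)
  qed
  then show ?thesis
    by (simp add: invertible_det_nz[symmetric] invertible_left_inverse matrix_left_invertible_ker)
qed

lemma det_poly: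
  fixes C :: "complex^'v::finite^'v"
  shows "\<exists>P. \<forall>w. det (mat w - C) = poly P w"
proof -
  define P where "P = (\<Sum>p\<in>{p. p permutes (UNIV::'v set)}. [:of_int (sign p):] *
      (\<Prod>i\<in>UNIV. [: - C$i$(p i), (if i = p i then 1 else 0) :]))"
  have "det (mat w - C) = poly P w" for w
    unfolding det_def P_def poly_sum poly_prod
    by (intro sum.cong refl arg_cong2[where f="(*)"] prod.cong) (auto simp: mat_def poly_mult poly_prod intro!: prod.cong)
  then show ?thesis by blast
qed

lemma finite_bad:
  fixes E :: "'v::finite \<Rightarrow> 'v \<Rightarrow> bool"
  shows "finite {w. det (mat w - claplacian E) = 0}"
proof -
  obtain P where P: "\<And>w. det (mat w - claplacian E) = poly P w" using det_poly by blast
  have "P \<noteq> 0" using det_m1[of E] P[of "-1"] by auto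
  then show ?thesis unfolding P by (rule poly_roots_finite)
qed

lemma eventually_avoid_finite:
  fixes x :: "'t::t1_space"
  assumes "finite S"
  shows "eventually (\<lambda>z. z \<notin> S) (at x)"
  unfolding eventually_at_topological
proof (intro exI conjI ballI impI)
  show "open (- (S - {x}))" using assms by (metis finite_Diff finite_imp_closed open_Compl)
  show "x \<in> - (S - {x})" by simp
  fix z assume "z \<in> - (S - {x})" "z \<noteq> x" then show "z \<notin> S" by auto
qed

lemma coronal_val:
  fixes E :: "'v::finite \<Rightarrow> 'v \<Rightarrow> bool"
  assumes "w \<noteq> 0" "det (mat w - claplacian E) \<noteq> 0"
  shows "coronal (claplacian E) w = of_nat CARD('v) / w"
proof -
  define A where "A = mat w - claplacian E"
  define B where "B = matrix_inv A"
  have "invertible A" using assms(2) by (simp add: A_def invertible_det_nz)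
  then have BA: "B ** A = mat 1" unfolding B_def matrix_inv_def invertible_def
    by (metis (mono_tags, lifting) someI_ex)
  have C1: "claplacian E *v ((\<chi> i. 1)) = 0"
    unfolding vec_eq_iff clap_apply by (simp only: vec_lambda_beta diff_self, simp)
  have "A *v (\<chi> i. 1) = w *s (\<chi> i. 1)"
    by (simp add: A_def matrix_vector_mult_diff_rdistrib mat_mulv C1)
  then have "B *v (w *s (\<chi> i. 1)) = (\<chi> i. 1)"
    by (metis BA matrix_vector_mul_assoc matrix_vector_mul_lid)
  then have "w *s (B *v (\<chi> i. 1)) = (\<chi> i. 1)" by (simp add: vector_scalar_commute)
  then have Bi: "(B *v (\<chi> i. 1)) $ i = 1 / w" for i
    using assms(1) by (auto simp: vec_eq_iff field_simps)
  have "coronal (claplacian E) w = (\<Sum>i\<in>UNIV. (B *v (\<chi> i. 1)) $ i)"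
    unfolding coronal_def B_def A_def by (simp add: matrix_vector_mult_def)
  also have "\<dots> = of_nat CARD('v) / w" by (simp add: Bi)
  finally show ?thesis .
qed



lemma root_iff:
  fixes E2 :: "'b::finite \<Rightarrow> 'b \<Rightarrow> bool" and m x :: complex
  shows "rat_root (\<lambda>x. x - of_nat CARD('b) - of_nat CARD('b) * m
                 - of_nat CARD('b) * coronal (claplacian E2) (x - of_nat CARD('b))) x
     \<longleftrightarrow> (x - of_nat CARD('b) - of_nat CARD('b) * m) * (x - of_nat CARD('b)) = of_nat CARD('b) * of_nat CARD('b)"
proof -
  define n :: complex where "n = of_nat CARD('b)"
  have n0: "n \<noteq> 0" unfolding n_def by simp
  define F where "F = (\<lambda>x. x - n - n * m - n * coronal (claplacian E2) (x - n))"
  define g where "g = (\<lambda>z. z - n - n * m - n * n / (z - n))"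
  define S where "S = insert n ((\<lambda>w. w + n) ` {w. det (mat w - claplacian E2) = 0})"
  have "finite S" unfolding S_def using finite_bad by blast
  then have evS: "eventually (\<lambda>z. z \<notin> S) (at x)" by (rule eventually_avoid_finite)
  have "eventually (\<lambda>z. F z = g z) (at x)"
  proof (rule eventually_mono[OF evS])
    fix z assume z: "z \<notin> S"
    then have "z - n \<noteq> 0" unfolding S_def by auto
    moreover have "det (mat (z - n) - claplacian E2) \<noteq> 0"
    proof
      assume "det (mat (z - n) - claplacian E2) = 0"
      then have "z \<in> S" unfolding S_def by (auto intro!: image_eqI[where x="z - n"])
      then show False using z by simp
    qed
    ultimately have "coronal (claplacian E2) (z - n) = n / (z - n)"
      unfolding n_def by (rule coronal_val)
    then show "F z = g z" unfolding F_def g_def by simp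
  qed
  then have rr: "rat_root F x \<longleftrightarrow> (g \<longlongrightarrow> 0) (at x)"
    unfolding rat_root_def by (rule tendsto_cong)
  have "rat_root F x \<longleftrightarrow> (x - n - n * m) * (x - n) = n * n"
  proof (cases "x = n")
    case True
    have "\<not> (g \<longlongrightarrow> 0) (at x)"
    proof
      assume g0: "(g \<longlongrightarrow> 0) (at x)"
      have l0: "((\<lambda>z. g z * (z - n)) \<longlongrightarrow> 0 * (x - n)) (at x)"
        by (intro tendsto_intros g0)
      have ev2: "eventually (\<lambda>z. g z * (z - n) = (z - n - n * m) * (z - n) - n * n) (at x)"
      proof -
        have "eventually (\<lambda>z. z \<noteq> x) (at x)" by (rule eventually_neq_at_within)
        then show ?thesis
        proof (rule eventually_mono)
          fix z assume "z \<noteq> x"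
          then have zn: "z - n \<noteq> 0" using True by simp
          have "g z * (z - n) = (z - n - n * m) * (z - n) - n * n / (z - n) * (z - n)"
            unfolding g_def by (simp add: left_diff_distrib)
          also have "n * n / (z - n) * (z - n) = n * n" using zn by simp
          finally show "g z * (z - n) = (z - n - n * m) * (z - n) - n * n" .
        qed
      qed
      have l1: "((\<lambda>z. (z - n - n * m) * (z - n) - n * n) \<longlongrightarrow> 0 * (x - n)) (at x)"
        using l0 tendsto_cong[OF ev2] by simp
      have l2: "((\<lambda>z. (z - n - n * m) * (z - n) - n * n) \<longlongrightarrow> (x - n - n * m) * (x - n) - n * n) (at x)"
        by (intro tendsto_intros)
      have "0 * (x - n) = (x - n - n * m) * (x - n) - n * n"
        by (rule tendsto_unique[OF trivial_limit_at l1 l2])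
      then show False using n0 True by simp
    qed
    then show ?thesis using rr True n0 by simp
  next
    case False
    have gx: "(g \<longlongrightarrow> g x) (at x)"
      unfolding g_def using False by (intro tendsto_intros) auto
    have "(g \<longlongrightarrow> 0) (at x) \<longleftrightarrow> g x = 0"
    proof
      assume "(g \<longlongrightarrow> 0) (at x)"
      from tendsto_unique[OF trivial_limit_at this gx] show "g x = 0" by simp
    next
      assume "g x = 0" then show "(g \<longlongrightarrow> 0) (at x)" using gx by simp
    qed
    also have "g x = 0 \<longleftrightarrow> (x - n - n * m) * (x - n) = n * n"
    proof -
      have "g x = 0 \<longleftrightarrow> x - n - n * m = n * n / (x - n)" unfolding g_def by simp
      also have "\<dots> \<longleftrightarrow> (x - n - n * m) * (x - n) = n * n" using False by (simp add: eq_divide_eq)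
      finally show ?thesis .
    qed
    finally show ?thesis using rr by simp
  qed
  then show ?thesis unfolding F_def n_def .
qed



lemma eig_iff: "is_eigenvalue A c \<longleftrightarrow> (\<exists>v. v \<noteq> 0 \<and> (\<forall>u. (A *v v)$u = c * v$u))"
  by (simp add: is_eigenvalue_def vec_eq_iff)

lemma sum_if_mult: "(\<Sum>j\<in>A. if P j then c * g j else 0) = (c::'c::comm_ring_1) * (\<Sum>j\<in>A. if P j then g j else 0)"
  by (auto simp: sum_distrib_left intro!: sum.cong)

lemma fwd1:
  fixes E1 :: "'a::finite \<Rightarrow> 'a \<Rightarrow> bool" and E2 :: "'b::finite \<Rightarrow> 'b \<Rightarrow> bool"
  assumes s2: "simple_graph E2" and li: "laplacian_integral (prod_graph E1 E2)"
  shows "laplacian_integral E2"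
  unfolding laplacian_integral_def
proof (intro allI impI)
  fix lam assume "is_eigenvalue (laplacian E2) lam"
  then obtain h where h0: "h \<noteq> 0" and hh: "\<And>k. (laplacian E2 *v h)$k = lam * h$k"
    unfolding eig_iff by blast
  show "lam \<in> \<int>"
  proof (cases "lam = 0")
    case True then show ?thesis by simp
  next
    case False
    have "(\<Sum>k\<in>UNIV. (laplacian E2 *v h)$k) = 0"
      unfolding lap_apply by (rule sym_sum_zero[OF s2])
    then have "lam * (\<Sum>k\<in>UNIV. h$k) = 0" by (simp add: hh sum_distrib_left)
    then have sh: "(\<Sum>k\<in>UNIV. h$k) = 0" using False by simp
    define N where "N = real CARD('b)"
    define V :: "real^('a \<times> 'b + 'a \<times> 'b)" where
      "V = (\<chi> u. case u of Inl p \<Rightarrow> 0 | Inr p \<Rightarrow> h $ snd p)"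
    have "V \<noteq> 0"
    proof
      assume V0: "V = 0"
      obtain k where "h$k \<noteq> 0" using h0 by (auto simp: vec_eq_iff)
      moreover have "V $ Inr (undefined, k) = 0" using V0 by simp
      ultimately show False unfolding V_def by simp
    qed
    moreover have "(laplacian (prod_graph E1 E2) *v V)$u = (lam + N) * V$u" for u
    proof (cases u)
      case (Inl p)
      obtain i k where p: "p = (i,k)" by (cases p)
      show ?thesis unfolding Inl p prod_lap_Inl by (simp add: V_def sum_negf sh cong: if_cong)
    next
      case (Inr p)
      obtain i k where p: "p = (i,k)" by (cases p)
      have "(laplacian E2 *v h)$k = (\<Sum>j\<in>UNIV. if E2 k j then h$k - h$j else 0)" by (rule lap_apply)
      then show ?thesis unfolding Inr p prod_lap_Inr
        by (simp add: V_def hh N_def algebra_simps cong: if_cong)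
    qed
    ultimately have "is_eigenvalue (laplacian (prod_graph E1 E2)) (lam + N)"
      unfolding eig_iff by blast
    then have "lam + N \<in> \<int>" using li unfolding laplacian_integral_def by blast
    then have "lam + N - N \<in> \<int>" unfolding N_def by (intro Ints_diff) auto
    then show ?thesis by simp
  qed
qed



lemma real_root:
  fixes x :: complex and N mu :: real
  assumes N: "N > 0" and eq: "(x - of_real N - of_real N * of_real mu) * (x - of_real N) = of_real N * of_real N"
  shows "Im x = 0" "(Re x - N - N * mu) * (Re x - N) = N * N"
proof -
  define a where "a = Re x"
  define b where "b = Im x"
  have re: "(a - N - N * mu) * (a - N) - b * b = N * N"
    using arg_cong[OF eq, of Re] by (simp add: a_def b_def)
  have im: "(a - N - N * mu) * b + b * (a - N) = 0"
    using arg_cong[OF eq, of Im] by (simp add: a_def b_def)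
  show "Im x = 0"
  proof (rule ccontr)
    assume "Im x \<noteq> 0"
    then have "b \<noteq> 0" by (simp add: b_def)
    then have "(a - N - N * mu) + (a - N) = 0" using im
      by (metis distrib_right mult.commute mult_eq_0_iff)
    then have "a - N - N * mu = - (a - N)" by simp
    then have "(a - N - N * mu) * (a - N) = - ((a - N) * (a - N))" by (simp only: mult_minus_left)
    then have "- ((a - N) * (a - N)) - b * b = N * N" using re by linarith
    moreover have "(a - N) * (a - N) \<ge> 0" "b * b \<ge> 0" by simp_all
    moreover have "N * N > 0" using N by simp
    ultimately show False by linarith
  qed
  then show "(Re x - N - N * mu) * (Re x - N) = N * N" using re by (simp add: a_def b_def)
qed

lemma fwd2:
  fixes E1 :: "'a::finite \<Rightarrow> 'a \<Rightarrow> bool" and E2 :: "'b::finite \<Rightarrow> 'b \<Rightarrow> bool"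
  assumes li: "laplacian_integral (prod_graph E1 E2)" and mu: "is_eigenvalue (laplacian E1) \<mu>"
    and rr: "rat_root (\<lambda>x. x - of_nat CARD('b) - of_nat CARD('b) * complex_of_real \<mu>
                 - of_nat CARD('b) * coronal (claplacian E2) (x - of_nat CARD('b))) x"
  shows "x \<in> \<int>"
proof -
  define N where "N = real CARD('b)"
  have N0: "N > 0" unfolding N_def by simp
  have cN: "(of_nat CARD('b) :: complex) = of_real N" unfolding N_def by simp
  have "(x - of_real N - of_real N * of_real \<mu>) * (x - of_real N) = of_real N * of_real N"
    using rr[unfolded root_iff] unfolding cN .
  from real_root[OF N0 this] have imx: "Im x = 0" and eq: "(Re x - N - N * \<mu>) * (Re x - N) = N * N"
    by auto
  define a where "a = Re x"
  have xa: "x = of_real a" using imx unfolding a_def by (simp add: complex_eq_iff)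
  have key: "N * (N - a) * \<mu> - N * a = a * (N - a)"
    using eq unfolding a_def[symmetric] by (simp add: algebra_simps)
  obtain f where f0: "f \<noteq> 0" and ff: "\<And>i. (laplacian E1 *v f)$i = \<mu> * f$i"
    using mu unfolding eig_iff by blast
  define V :: "real^('a \<times> 'b + 'a \<times> 'b)" where
    "V = (\<chi> u. case u of Inl p \<Rightarrow> f $ fst p * (N - a) | Inr p \<Rightarrow> f $ fst p * N)"
  have "V \<noteq> 0"
  proof
    assume V0: "V = 0"
    obtain i where "f$i \<noteq> 0" using f0 by (auto simp: vec_eq_iff)
    moreover have "V $ Inr (i, undefined) = 0" using V0 by simp
    ultimately show False unfolding V_def using N0 by simp
  qed
  moreover have "(laplacian (prod_graph E1 E2) *v V)$u = a * V$u" for u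
  proof (cases u)
    case (Inl p)
    obtain i k where p: "p = (i,k)" by (cases p)
    have A: "(\<Sum>j\<in>UNIV. if E1 i j then (\<Sum>l\<in>UNIV. V $ Inl (i, k) - V $ Inl (j, l)) else 0)
        = (N * (N - a)) * (\<Sum>j\<in>UNIV. if E1 i j then f$i - f$j else 0)"
      by (subst sum_if_mult[symmetric]) (rule sum.cong, simp_all add: V_def N_def algebra_simps)
    have B: "(\<Sum>j\<in>UNIV. if E1 i j then f$i - f$j else 0) = \<mu> * f$i"
      using ff[of i] unfolding lap_apply .
    have C: "(\<Sum>q\<in>UNIV. V $ Inl (i, k) - V $ Inr (i, q)) = N * (- a * f$i)"
      by (simp add: V_def N_def algebra_simps)
    have "(laplacian (prod_graph E1 E2) *v V)$u = N * (N - a) * \<mu> * f$i - N * a * f$i"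
      unfolding Inl p prod_lap_Inl A B C by (simp add: algebra_simps)
    also have "\<dots> = (N * (N - a) * \<mu> - N * a) * f$i" by (simp add: algebra_simps)
    also have "\<dots> = a * V$u" unfolding key by (simp add: V_def Inl p)
    finally show ?thesis .
  next
    case (Inr p)
    obtain i k where p: "p = (i,k)" by (cases p)
    show ?thesis unfolding Inr p prod_lap_Inr
      by (simp add: V_def N_def algebra_simps cong: if_cong)
  qed
  ultimately have "is_eigenvalue (laplacian (prod_graph E1 E2)) a"
    unfolding eig_iff by blast
  then have "a \<in> \<int>" using li unfolding laplacian_integral_def by blast
  then show ?thesis unfolding xa by simp
qed



lemma sum_if_diff: "(\<Sum>j\<in>(UNIV::'v::finite set). if P j then a - g j else 0) = of_nat (card {j. P j}) * a - (\<Sum>j\<in>UNIV. if P j then g j else (0::'c::comm_ring_1))"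
  by (simp add: if_diff_distrib sum_subtractf sum_if_const)

lemma bwd:
  fixes E1 :: "'a::finite \<Rightarrow> 'a \<Rightarrow> bool" and E2 :: "'b::finite \<Rightarrow> 'b \<Rightarrow> bool"
  assumes s2: "simple_graph E2" and li2: "laplacian_integral E2"
    and roots: "\<forall>\<mu>. is_eigenvalue (laplacian E1) \<mu> \<longrightarrow>
        (\<forall>x. rat_root (\<lambda>x. x - of_nat CARD('b) - of_nat CARD('b) * complex_of_real \<mu>
                 - of_nat CARD('b) * coronal (claplacian E2) (x - of_nat CARD('b))) x
             \<longrightarrow> x \<in> \<int>)"
  shows "laplacian_integral (prod_graph E1 E2)"
  unfolding laplacian_integral_def
proof (intro allI impI)
  fix c assume "is_eigenvalue (laplacian (prod_graph E1 E2)) c"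
  then obtain V where V0: "V \<noteq> 0" and VV: "\<And>u. (laplacian (prod_graph E1 E2) *v V)$u = c * V$u"
    unfolding eig_iff by blast
  define N where "N = real CARD('b)"
  have N0: "N > 0" unfolding N_def by simp
  define x where "x i k = V $ Inl (i,k)" for i k
  define y where "y i k = V $ Inr (i,k)" for i k
  have eqA: "(\<Sum>j\<in>UNIV. if E1 i j then (\<Sum>l\<in>UNIV. x i k - x j l) else 0) + (\<Sum>q\<in>UNIV. x i k - y i q) = c * x i k" for i k
    using VV[of "Inl (i,k)"] unfolding prod_lap_Inl x_def y_def .
  have eqB: "(\<Sum>p\<in>UNIV. y i k - x i p) + (\<Sum>j\<in>UNIV. if E2 k j then y i k - y i j else 0) = c * y i k" for i k
    using VV[of "Inr (i,k)"] unfolding prod_lap_Inr x_def y_def .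
  show "c \<in> \<int>"
  proof (cases "\<exists>i k k'. x i k \<noteq> x i k'")
    case True
    then obtain i k k' where kk: "x i k \<noteq> x i k'" by blast
    define d where "d = card {j. E1 i j}"
    define R where "R = (\<Sum>j\<in>UNIV. if E1 i j then (\<Sum>l\<in>UNIV. x j l) else 0) + (\<Sum>q\<in>UNIV. y i q)"
    have form: "(real d * N + N) * x i t - R = c * x i t" for t
    proof -
      have "(\<Sum>j\<in>UNIV. if E1 i j then (\<Sum>l\<in>UNIV. x i t - x j l) else 0)
          = (\<Sum>j\<in>UNIV. if E1 i j then N * x i t - (\<Sum>l\<in>UNIV. x j l) else 0)"
        by (rule sum.cong) (simp_all add: sum_subtractf N_def)
      also have "\<dots> = real d * (N * x i t) - (\<Sum>j\<in>UNIV. if E1 i j then (\<Sum>l\<in>UNIV. x j l) else 0)"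
        unfolding sum_if_diff d_def by simp
      finally have "(\<Sum>j\<in>UNIV. if E1 i j then (\<Sum>l\<in>UNIV. x i t - x j l) else 0)
          = real d * (N * x i t) - (\<Sum>j\<in>UNIV. if E1 i j then (\<Sum>l\<in>UNIV. x j l) else 0)" .
      moreover have "(\<Sum>q\<in>UNIV. x i t - y i q) = N * x i t - (\<Sum>q\<in>UNIV. y i q)"
        by (simp add: sum_subtractf N_def)
      ultimately show ?thesis using eqA[of i t] unfolding R_def by (simp add: algebra_simps)
    qed
    have "(real d * N + N - c) * (x i k - x i k') = 0"
      using form[of k] form[of k'] by (simp add: algebra_simps)
    then have "c = real d * N + N" using kk by simp
    then show ?thesis unfolding N_def by simp
  next
    case False
    define X where "X i = x i undefined" for i
    have xX: "x i k = X i" for i k using False unfolding X_def by blast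
    define Y where "Y i = (\<Sum>q\<in>UNIV. y i q)" for i
    have S: "N * Y i - N * N * X i = c * Y i" for i
    proof -
      have "(\<Sum>k\<in>UNIV. (\<Sum>p\<in>UNIV. y i k - x i p) + (\<Sum>j\<in>UNIV. if E2 k j then y i k - y i j else 0))
           = (\<Sum>k\<in>UNIV. c * y i k)"
        using eqB by simp
      moreover have "(\<Sum>k\<in>UNIV. (\<Sum>j\<in>UNIV. if E2 k j then y i k - y i j else 0)) = 0"
        by (rule sym_sum_zero[OF s2])
      moreover have "(\<Sum>k\<in>UNIV. (\<Sum>p\<in>UNIV. y i k - x i p)) = N * Y i - N * N * X i"
        by (simp add: xX sum_subtractf Y_def N_def algebra_simps sum_distrib_left)
      ultimately show ?thesis by (simp add: sum.distrib Y_def sum_distrib_left)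
    qed
    show ?thesis
    proof (cases "\<exists>i k k'. y i k \<noteq> y i k'")
      case True
      then obtain i k k' where kk: "y i k \<noteq> y i k'" by blast
      define w :: "real^'b" where "w = (\<chi> k. y i k - Y i / N)"
      have "w \<noteq> 0"
      proof
        assume "w = 0"
        then have "w $ k = 0" "w $ k' = 0" by simp_all
        then show False using kk unfolding w_def by simp
      qed
      moreover have "(laplacian E2 *v w)$t = (c - N) * w$t" for t
      proof -
        have "(laplacian E2 *v w)$t = (\<Sum>j\<in>UNIV. if E2 t j then y i t - y i j else 0)"
          unfolding lap_apply w_def by (simp cong: if_cong)
        also have "\<dots> = c * y i t - N * y i t + N * X i"
          using eqB[of i t] by (simp add: xX sum_subtractf N_def algebra_simps)
        also have "\<dots> = (c - N) * w$t"
        proof -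
          have "N * N * X i = (N - c) * Y i" using S[of i] by (simp add: algebra_simps)
          then have "N * X i = (N - c) * Y i / N" using N0 by (simp add: field_simps)
          then show ?thesis unfolding w_def using N0 by (simp add: field_simps)
        qed
        finally show ?thesis .
      qed
      ultimately have "is_eigenvalue (laplacian E2) (c - N)" unfolding eig_iff by blast
      then have "c - N \<in> \<int>" using li2 unfolding laplacian_integral_def by blast
      then have "c - N + N \<in> \<int>" unfolding N_def by (intro Ints_add) auto
      then show ?thesis by simp
    next
      case False
      define T where "T i = y i undefined" for i
      have yT: "y i k = T i" for i k using False unfolding T_def by blast
      show ?thesis
      proof (cases "c = N")
        case True then show ?thesis unfolding N_def by simp
      next
        case cN: False
        have eB: "N * (T i - X i) = c * T i" for i
          using eqB[of i undefined] by (simp add: xX yT N_def cong: if_cong)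
        have Ti: "T i = N * X i / (N - c)" for i
          using eB[of i] cN by (simp add: field_simps)
        have eA: "N * (\<Sum>j\<in>UNIV. if E1 i j then X i - X j else 0) + N * (X i - T i) = c * X i" for i
        proof -
          have "(\<Sum>j\<in>UNIV. if E1 i j then (\<Sum>l\<in>UNIV. x i undefined - x j l) else 0)
             = N * (\<Sum>j\<in>UNIV. if E1 i j then X i - X j else 0)"
            by (subst sum_if_mult[symmetric]) (rule sum.cong, simp_all add: xX N_def)
          then show ?thesis using eqA[of i undefined] by (simp add: xX yT N_def cong: if_cong)
        qed
        define Xv :: "real^'a" where "Xv = (\<chi> i. X i)"
        have "Xv \<noteq> 0"
        proof
          assume "Xv = 0"
          then have X0: "X i = 0" for i by (metis Xv_def vec_lambda_beta zero_index)
          have "V $ u = 0" for u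
          proof (cases u)
            case (Inl p) then show ?thesis using X0 xX x_def by (cases p) auto
          next
            case (Inr p) then show ?thesis using X0 Ti yT y_def by (cases p) auto
          qed
          then show False using V0 by (simp add: vec_eq_iff)
        qed
        define mu where "mu = (c - N + N * N / (N - c)) / N"
        have "(laplacian E1 *v Xv)$i = mu * Xv$i" for i
        proof -
          have "(laplacian E1 *v Xv)$i = (\<Sum>j\<in>UNIV. if E1 i j then X i - X j else 0)"
            unfolding lap_apply Xv_def by (simp cong: if_cong)
          also have "\<dots> = (c * X i - N * X i + N * T i) / N"
            using eA[of i] N0 by (simp add: field_simps)
          also have "\<dots> = mu * Xv$i"
            unfolding Ti mu_def Xv_def using N0 cN by (simp add: field_simps)
          finally show ?thesis .
        qed
        with \<open>Xv \<noteq> 0\<close> have mueig: "is_eigenvalue (laplacian E1) mu" unfolding eig_iff by blast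
        have req: "(c - N - N * mu) * (c - N) = N * N"
        proof -
          have "N * mu = c - N + N * N / (N - c)" unfolding mu_def using N0 by simp
          then have "c - N - N * mu = - (N * N / (N - c))" by simp
          then show ?thesis using cN by (simp add: field_simps)
        qed
        have cN': "(of_nat CARD('b) :: complex) = of_real N" unfolding N_def by simp
        have "(complex_of_real c - of_real N - of_real N * of_real mu) * (of_real c - of_real N) = of_real N * of_real N"
          using arg_cong[OF req, of complex_of_real] by simp
        then have "(complex_of_real c - of_nat CARD('b) - of_nat CARD('b) * of_real mu) * (of_real c - of_nat CARD('b)) = of_nat CARD('b) * of_nat CARD('b)"
          unfolding cN' .
        then have "rat_root (\<lambda>x. x - of_nat CARD('b) - of_nat CARD('b) * complex_of_real mu
                 - of_nat CARD('b) * coronal (claplacian E2) (x - of_nat CARD('b))) (complex_of_real c)"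
          by (simp only: root_iff)
        then have "complex_of_real c \<in> \<int>" using roots mueig by blast
        then show ?thesis by simp
      qed
    qed
  qed
qed

theorem theorem6:
  fixes E1 :: "'a::finite \<Rightarrow> 'a \<Rightarrow> bool" and E2 :: "'b::finite \<Rightarrow> 'b \<Rightarrow> bool"
    and r1 r2 :: nat
  assumes "simple_graph E1" and "simple_graph E2"
    and "regular E1 r1" and "regular E2 r2"
  shows "laplacian_integral (prod_graph E1 E2) \<longleftrightarrow>
    (laplacian_integral E2 \<and>
     (\<forall>\<mu>. is_eigenvalue (laplacian E1) \<mu> \<longrightarrow>
        (\<forall>x. rat_root (\<lambda>x. x - of_nat CARD('b) - of_nat CARD('b) * complex_of_real \<mu>
                 - of_nat CARD('b) * coronal (claplacian E2) (x - of_nat CARD('b))) x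
             \<longrightarrow> x \<in> \<int>)))"
  proof
  assume li: "laplacian_integral (prod_graph E1 E2)"
  show "laplacian_integral E2 \<and>
     (\<forall>\<mu>. is_eigenvalue (laplacian E1) \<mu> \<longrightarrow>
        (\<forall>x. rat_root (\<lambda>x. x - of_nat CARD('b) - of_nat CARD('b) * complex_of_real \<mu>
                 - of_nat CARD('b) * coronal (claplacian E2) (x - of_nat CARD('b))) x
             \<longrightarrow> x \<in> \<int>))"
    using fwd1[OF assms(2) li] fwd2[OF li] by blast
next
  assume "laplacian_integral E2 \<and>
     (\<forall>\<mu>. is_eigenvalue (laplacian E1) \<mu> \<longrightarrow>
        (\<forall>x. rat_root (\<lambda>x. x - of_nat CARD('b) - of_nat CARD('b) * complex_of_real \<mu>
                 - of_nat CARD('b) * coronal (claplacian E2) (x - of_nat CARD('b))) x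
             \<longrightarrow> x \<in> \<int>))"
  then show "laplacian_integral (prod_graph E1 E2)"
    using bwd[OF assms(2)] by blast
qed

end
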